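(* Let $\mathcal G$ be a convex set of functions $\mathcal X\to\mathbb R^{d_y}$ with $0\in\mathcal G$, let $\theta>8$, $r>0$, $\alpha\in[1,2]$, $C>0$, $S\ge1$. Let $\partial B(r):=\{f\in\mathcal G:\|f\|_{L^2}=r\}$ and let $\mathcal F_r\subseteq\partial B(r)$ be an $r/\sqrt\theta$-cover of $\partial B(r)$ in the norm $\|f\|_\infty=\sup_x\|f(x)\|_2$ of minimal cardinality $N_\infty(\partial B(r),r/\sqrt\theta)$. Assume every $f\in\mathcal F_r$ satisfies $S$-persistence and $(C,\alpha)$-hypercontractivity. Define the event $$\mathcal A_r:=\Big\{\exists f\in\mathcal G:\ \|f\|_{L^2}>r,\ \tfrac1T\textstyle\sum_{t=0}^{T-1}\|f(X_t)\|_2^2\le\tfrac1\theta\|f\|_{L^2}^2\Big\}.$$ Then $$\mathsf P_X(\mathcal A_r)\le N_\infty\big(\partial B(r),\tfrac{r}{\sqrt\theta}\big)\exp\Big\{-\frac{8T\,r^{4-2\alpha}}{\theta^2CS}\Big\}.$$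
   Context: $X=(X_0,\dots,X_{T-1})$ is a random trajectory in a set $\mathcal X^T$ with law $\mathsf P_X$. For $f:\mathcal X\to\mathbb R^{d_y}$, $\|f\|_{L^2}^2:=\frac1T\sum_{t}\mathbb E\|f(X_t)\|_2^2$. A function $f$ satisfies $S$-persistence if for every $\xi\ge0$, $\mathbb E\exp(-\xi\sum_t\|f(X_t)\|_2^2)\le\exp\big(-\xi\sum_t\mathbb E\|f(X_t)\|_2^2+\frac{\xi^2S}{2}\sum_t\mathbb E\|f(X_t)\|_2^4\big)$. A function $f$ is $(C,\alpha)$-hypercontractive if $\frac1T\sum_t\mathbb E\|f(X_t)\|_2^4\le C\big(\frac1T\sum_t\mathbb E\|f(X_t)\|_2^2\big)^\alpha$. (In the paper, $\mathcal G$ is the shifted effective class $\{f-f_\star: f\in\mathcal F,\ \|\mathcal D(f-f_\star)\|_{L^2}^2\le\rho\}$, which is convex and contains $0$.) *)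

theory Defs
  imports "HOL-Probability.Probability"
begin

definition L2sq :: "'w measure \<Rightarrow> (nat \<Rightarrow> 'w \<Rightarrow> 'x) \<Rightarrow> nat \<Rightarrow> ('x \<Rightarrow> 'y::real_normed_vector) \<Rightarrow> real" where
  "L2sq M X T f = (1 / real T) * (\<Sum>t<T. integral\<^sup>L M (\<lambda>\<omega>. (norm (f (X t \<omega>)))^2))"

definition L2norm :: "'w measure \<Rightarrow> (nat \<Rightarrow> 'w \<Rightarrow> 'x) \<Rightarrow> nat \<Rightarrow> ('x \<Rightarrow> 'y::real_normed_vector) \<Rightarrow> real" where
  "L2norm M X T f = sqrt (L2sq M X T f)"

definition persistent :: "'w measure \<Rightarrow> (nat \<Rightarrow> 'w \<Rightarrow> 'x) \<Rightarrow> nat \<Rightarrow> real \<Rightarrow> ('x \<Rightarrow> 'y::real_normed_vector) \<Rightarrow> bool" where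
  "persistent M X T S f \<longleftrightarrow> (\<forall>\<xi>::real. \<xi> \<ge> 0 \<longrightarrow>
     integral\<^sup>L M (\<lambda>\<omega>. exp (- \<xi> * (\<Sum>t<T. (norm (f (X t \<omega>)))^2)))
     \<le> exp (- \<xi> * (\<Sum>t<T. integral\<^sup>L M (\<lambda>\<omega>. (norm (f (X t \<omega>)))^2))
             + \<xi>^2 * S / 2 * (\<Sum>t<T. integral\<^sup>L M (\<lambda>\<omega>. (norm (f (X t \<omega>)))^4))))"

definition hypercontractive :: "'w measure \<Rightarrow> (nat \<Rightarrow> 'w \<Rightarrow> 'x) \<Rightarrow> nat \<Rightarrow> real \<Rightarrow> real \<Rightarrow> ('x \<Rightarrow> 'y::real_normed_vector) \<Rightarrow> bool" where
  "hypercontractive M X T C \<alpha> f \<longleftrightarrow>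
     (1 / real T) * (\<Sum>t<T. integral\<^sup>L M (\<lambda>\<omega>. (norm (f (X t \<omega>)))^4))
     \<le> C * (L2sq M X T f) powr \<alpha>"

definition fun_convex :: "('x \<Rightarrow> 'y::real_vector) set \<Rightarrow> bool" where
  "fun_convex G \<longleftrightarrow> (\<forall>f\<in>G. \<forall>g\<in>G. \<forall>u::real. 0 \<le> u \<and> u \<le> 1 \<longrightarrow>
      (\<lambda>x. u *\<^sub>R f x + (1 - u) *\<^sub>R g x) \<in> G)"

definition L2sphere :: "'w measure \<Rightarrow> (nat \<Rightarrow> 'w \<Rightarrow> 'x) \<Rightarrow> nat \<Rightarrow> ('x \<Rightarrow> 'y::real_normed_vector) set \<Rightarrow> real \<Rightarrow> ('x \<Rightarrow> 'y) set" where
  "L2sphere M X T G r = {f\<in>G. L2norm M X T f = r}"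

definition sup_cover :: "('x \<Rightarrow> 'y::real_normed_vector) set \<Rightarrow> real \<Rightarrow> ('x \<Rightarrow> 'y) set \<Rightarrow> bool" where
  "sup_cover A \<epsilon> F \<longleftrightarrow> F \<subseteq> A \<and> (\<forall>f\<in>A. \<exists>g\<in>F. \<forall>x. norm (f x - g x) \<le> \<epsilon>)"

end

theory Submission
  imports Defs
begin

lemma sq2_le: "((x::real) + y)^2 \<le> 2 * x^2 + 2 * y^2"
proof -
  have "(x+y)^2 + (x-y)^2 = 2*x^2+2*y^2" by (simp add: power2_eq_square algebra_simps)
  moreover have "(x-y)^2 \<ge> 0" by simp
  ultimately show ?thesis by linarith
qed

lemma chernoff:
  fixes Z :: "'w \<Rightarrow> real"
  assumes P: "prob_space M" and Zm: "Z \<in> borel_measurable M" and xi: "\<xi> \<ge> 0"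
    and Zpos: "\<And>\<omega>. \<omega> \<in> space M \<Longrightarrow> Z \<omega> \<ge> 0"
  shows "measure M {\<omega>\<in>space M. Z \<omega> \<le> a} \<le> (\<integral>\<omega>. exp (- \<xi> * Z \<omega>) \<partial>M) * exp (\<xi> * a)"
proof -
  interpret prob_space M by fact
  have int: "integrable M (\<lambda>\<omega>. exp (- \<xi> * Z \<omega>))"
  proof (rule integrable_const_bound[where B=1])
    show "AE x in M. norm (exp (- \<xi> * Z x)) \<le> 1"
      using xi Zpos by (auto intro!: AE_I2 simp: mult_nonneg_nonneg)
    show "(\<lambda>x. exp (- \<xi> * Z x)) \<in> borel_measurable M" using Zm by measurable
  qed
  have "measure M {\<omega>\<in>space M. Z \<omega> \<le> a} \<le> measure M {\<omega>\<in>space M. exp (- \<xi> * Z \<omega>) \<ge> exp (- \<xi> * a)}"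
  proof (rule finite_measure_mono)
    show "{\<omega>\<in>space M. Z \<omega> \<le> a} \<subseteq> {\<omega>\<in>space M. exp (- \<xi> * Z \<omega>) \<ge> exp (- \<xi> * a)}"
      using xi by (auto intro: mult_left_mono)
    show "{\<omega>\<in>space M. exp (- \<xi> * Z \<omega>) \<ge> exp (- \<xi> * a)} \<in> sets M" using Zm by measurable
  qed
  also have "\<dots> \<le> (\<integral>\<omega>. exp (- \<xi> * Z \<omega>) \<partial>M) / exp (- \<xi> * a)"
    by (rule integral_Markov_inequality_measure[OF int, where A="space M"]) auto
  also have "\<dots> = (\<integral>\<omega>. exp (- \<xi> * Z \<omega>) \<partial>M) * exp (\<xi> * a)"
    by (simp add: exp_minus divide_inverse)
  finally show ?thesis .
qed

lemma expo_ineq: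
  fixes \<theta> r T K :: real
  assumes "\<theta> > 8" "r > 0" "T > 0" "K > 0"
  shows "(r^2 / (2*K)) * (4 * T * r^2 / \<theta>) - (r^2 / (2*K)) * T * r^2 + (r^2/(2*K))^2 / 2 * (T * K)
     \<le> - (8 * T * r^4 / K) / \<theta>^2"
proof -
  define q where "q = T * r^4 / K"
  have q: "q > 0" using assms by (simp add: q_def)
  have e1: "(r^2 / (2*K)) * (4 * T * r^2 / \<theta>) = q * (2/\<theta>)"
    unfolding q_def using assms by (simp add: power4_eq_xxxx power2_eq_square mult_ac)
  have e2: "(r^2 / (2*K)) * T * r^2 = q * (1/2)"
    unfolding q_def using assms by (simp add: power4_eq_xxxx power2_eq_square mult_ac)
  have e3: "(r^2/(2*K))^2 / 2 * (T * K) = q * (1/8)"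
    unfolding q_def using assms by (simp add: power4_eq_xxxx power2_eq_square mult_ac)
  have lhs: "(r^2 / (2*K)) * (4 * T * r^2 / \<theta>) - (r^2 / (2*K)) * T * r^2 + (r^2/(2*K))^2 / 2 * (T * K)
     = q * (2/\<theta> - 3/8)" unfolding e1 e2 e3 by (simp add: algebra_simps)
  have rhs: "- (8 * T * r^4 / K) / \<theta>^2 = q * (- 8 / \<theta>^2)" by (simp add: q_def)
  have "2/\<theta> + 8/\<theta>^2 \<le> 3/8"
  proof -
    have "2/\<theta> \<le> 1/4" using assms by (simp add: field_simps)
    moreover have "(8::real)^2 \<le> \<theta>^2" using assms by (intro power_mono) auto
    hence "8/\<theta>^2 \<le> 1/8" using assms by (simp add: divide_simps)
    ultimately show ?thesis by simp
  qed
  hence "2/\<theta> - 3/8 \<le> - 8 / \<theta>^2" by simp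
  hence "q * (2/\<theta> - 3/8) \<le> q * (- 8 / \<theta>^2)" using q by (intro mult_left_mono) auto
  thus ?thesis unfolding lhs rhs .
qed


theorem mainTheorem7:
  fixes M :: "'w measure" and N :: "'x measure" and X :: "nat \<Rightarrow> 'w \<Rightarrow> 'x" and T :: nat
    and G :: "('x \<Rightarrow> 'y::euclidean_space) set" and Fr :: "('x \<Rightarrow> 'y) set"
    and \<theta> r \<alpha> C S :: real
  assumes "prob_space M" and "T > 0"
    and "\<forall>t<T. X t \<in> measurable M N"
    and "fun_convex G" and "(\<lambda>x. 0) \<in> G"
    and "\<forall>f\<in>G. f \<in> borel_measurable N"
    and "\<forall>f\<in>G. \<forall>t<T. integrable M (\<lambda>\<omega>. (norm (f (X t \<omega>)))^2)"
    and "\<theta> > 8" and "r > 0" and "1 \<le> \<alpha>" and "\<alpha> \<le> 2" and "C > 0" and "S \<ge> 1"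
    and "finite Fr" and "sup_cover (L2sphere M X T G r) (r / sqrt \<theta>) Fr"
    and "\<forall>F'. finite F' \<and> sup_cover (L2sphere M X T G r) (r / sqrt \<theta>) F' \<longrightarrow> card Fr \<le> card F'"
    and "\<forall>f\<in>Fr. \<forall>t<T. integrable M (\<lambda>\<omega>. (norm (f (X t \<omega>)))^4)"
    and "\<forall>f\<in>Fr. persistent M X T S f"
    and "\<forall>f\<in>Fr. hypercontractive M X T C \<alpha> f"
  shows "\<exists>E\<in>sets M.
           {\<omega>\<in>space M. \<exists>f\<in>G. L2norm M X T f > r \<and>
              (1 / real T) * (\<Sum>t<T. (norm (f (X t \<omega>)))^2) \<le> (1 / \<theta>) * (L2norm M X T f)^2} \<subseteq> E
         \<and> measure M E \<le> real (card Fr) * exp (- (8 * real T * r powr (4 - 2 * \<alpha>)) / (\<theta>^2 * C * S))"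
  proof -
  note A = assms
  interpret prob_space M by fact
  define emp where "emp = (\<lambda>(f::'x \<Rightarrow> 'y) \<omega>. \<Sum>t<T. (norm (f (X t \<omega>)))^2)"
  define a where "a = 4 * real T * r^2 / \<theta>"
  define E where "E = (\<Union>h\<in>Fr. {\<omega>\<in>space M. emp h \<omega> \<le> a})"
  have FrG: "Fr \<subseteq> G" using A(15) unfolding sup_cover_def L2sphere_def by auto
  have meas: "emp h \<in> borel_measurable M" if "h \<in> G" for h
    unfolding emp_def
  proof (rule borel_measurable_sum)
    fix t assume "t \<in> {..<T}"
    hence "(\<lambda>\<omega>. h (X t \<omega>)) \<in> borel_measurable M"
      using A(3) A(6) that \<open>t \<in> {..<T}\<close> by (metis lessThan_iff measurable_compose)
    hence "(\<lambda>\<omega>. norm (h (X t \<omega>))) \<in> borel_measurable M"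
      using borel_measurable_norm measurable_compose by blast
    thus "(\<lambda>\<omega>. (norm (h (X t \<omega>)))^2) \<in> borel_measurable M" by (rule borel_measurable_power)
  qed
  have Esets: "E \<in> sets M" unfolding E_def
  proof (intro sets.finite_UN A(14))
    fix h assume "h \<in> Fr"
    hence "emp h \<in> borel_measurable M" using FrG meas by auto
    thus "{\<omega>\<in>space M. emp h \<omega> \<le> a} \<in> sets M" unfolding borel_measurable_iff_le by blast
  qed
  have incl: "{\<omega>\<in>space M. \<exists>f\<in>G. L2norm M X T f > r \<and>
              (1 / real T) * (\<Sum>t<T. (norm (f (X t \<omega>)))^2) \<le> (1 / \<theta>) * (L2norm M X T f)^2} \<subseteq> E"
  proof
    fix \<omega> assume "\<omega> \<in> {\<omega>\<in>space M. \<exists>f\<in>G. L2norm M X T f > r \<and>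
              (1 / real T) * (\<Sum>t<T. (norm (f (X t \<omega>)))^2) \<le> (1 / \<theta>) * (L2norm M X T f)^2}"
    then obtain f where om: "\<omega> \<in> space M" and fG: "f \<in> G" and fL: "L2norm M X T f > r"
      and fe: "(1 / real T) * emp f \<omega> \<le> (1 / \<theta>) * (L2norm M X T f)^2"
      unfolding emp_def by auto
    define L where "L = L2norm M X T f"
    define u where "u = r / L"
    have L0: "L > 0" using fL A(9) unfolding L_def by linarith
    have u0: "u > 0" and u1: "u \<le> 1" using L0 fL A(9) unfolding u_def L_def by auto
    define g where "g = (\<lambda>x. u *\<^sub>R f x)"
    have conv: "\<forall>f\<in>G. \<forall>g\<in>G. \<forall>u::real. 0 \<le> u \<and> u \<le> 1 \<longrightarrow>
      (\<lambda>x. u *\<^sub>R f x + (1 - u) *\<^sub>R g x) \<in> G" using A(4) unfolding fun_convex_def .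
    have "(\<lambda>x. u *\<^sub>R f x + (1 - u) *\<^sub>R (\<lambda>x. 0) x) \<in> G"
      by (rule conv[rule_format, OF fG A(5)]) (use u0 u1 in auto)
    hence gG: "g \<in> G" unfolding g_def by simp
    have Lsq: "L2sq M X T f = L^2"
    proof -
      have "sqrt (L2sq M X T f) = L" unfolding L_def L2norm_def ..
      moreover have "L2sq M X T f > 0"
      proof (rule ccontr)
        assume "\<not> L2sq M X T f > 0"
        hence "sqrt (L2sq M X T f) \<le> 0" by simp
        thus False using L0 calculation by simp
      qed
      ultimately show ?thesis by auto
    qed
    have nsq: "(norm (g y))^2 = u^2 * (norm (f y))^2" for y
      unfolding g_def using u0 by (simp add: power_mult_distrib)
    have "L2sq M X T g = u^2 * L2sq M X T f"
      unfolding L2sq_def nsq by (simp add: sum_distrib_left)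
    moreover have "sqrt (u^2 * L^2) = u * L" using u0 L0 by (simp add: real_sqrt_mult)
    moreover have "u * L = r" using L0 unfolding u_def by simp
    ultimately have "L2norm M X T g = r" unfolding L2norm_def Lsq by simp
    hence "g \<in> L2sphere M X T G r" using gG unfolding L2sphere_def by auto
    then obtain h where hF: "h \<in> Fr" and hc: "\<forall>x. norm (g x - h x) \<le> r / sqrt \<theta>"
      using A(15) unfolding sup_cover_def by blast
    have eg: "emp g \<omega> = u^2 * emp f \<omega>" unfolding emp_def nsq by (simp add: sum_distrib_left)
    have "emp f \<omega> = real T * ((1 / real T) * emp f \<omega>)" using A(2) by simp
    also have "\<dots> \<le> real T * ((1 / \<theta>) * L^2)" using fe unfolding L_def
      by (intro mult_left_mono) auto
    finally have "emp f \<omega> \<le> real T / \<theta> * L^2" by simp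
    hence "u^2 * emp f \<omega> \<le> u^2 * (real T / \<theta> * L^2)" by (rule mult_left_mono) simp
    also have "\<dots> = real T * r^2 / \<theta>" unfolding u_def using L0 by (simp add: power_divide)
    finally have egb: "emp g \<omega> \<le> real T * r^2 / \<theta>" using eg by simp
    have pt: "(norm (h y))^2 \<le> 2 * (norm (g y))^2 + 2 * (r^2 / \<theta>)" for y
    proof -
      have t1: "norm (h y) \<le> norm (g y) + norm (g y - h y)"
        by (metis norm_minus_commute norm_triangle_sub)
      have b0: "0 \<le> norm (g y - h y)" by simp
      have "(norm (g y - h y))^2 \<le> (r / sqrt \<theta>)^2" using hc b0 by (intro power_mono) auto
      also have "\<dots> = r^2 / \<theta>" using A(8) by (simp add: power_divide)
      finally have t2: "(norm (g y - h y))^2 \<le> r^2 / \<theta>" .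
      have "(norm (h y))^2 \<le> (norm (g y) + norm (g y - h y))^2"
        using t1 by (intro power_mono) auto
      also have "\<dots> \<le> 2 * (norm (g y))^2 + 2 * (norm (g y - h y))^2"
        by (rule sq2_le)
      finally show ?thesis using t2 by linarith
    qed
    have "emp h \<omega> \<le> (\<Sum>t<T. 2 * (norm (g (X t \<omega>)))^2 + 2 * (r^2 / \<theta>))"
      unfolding emp_def by (intro sum_mono pt)
    also have "\<dots> = 2 * emp g \<omega> + 2 * real T * r^2 / \<theta>"
      unfolding emp_def by (simp add: sum.distrib sum_distrib_left)
    also have "\<dots> \<le> a"
    proof -
      have e1: "2 * real T * r^2 / \<theta> = 2 * (real T * r^2 / \<theta>)" and e2: "4 * real T * r^2 / \<theta> = 4 * (real T * r^2 / \<theta>)"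
        by simp_all
      show ?thesis unfolding a_def e1 e2 using egb by (smt (verit))
    qed
    finally show "\<omega> \<in> E" unfolding E_def using hF om by auto
  qed
  have bound: "measure M {\<omega>\<in>space M. emp h \<omega> \<le> a} \<le> exp (- (8 * real T * r powr (4 - 2 * \<alpha>)) / (\<theta>^2 * C * S))"
    if "h \<in> Fr" for h
  proof -
    have hG: "h \<in> G" using that FrG by auto
    have hs: "L2norm M X T h = r" using that A(15) unfolding sup_cover_def L2sphere_def by auto
    have hsq: "L2sq M X T h = r^2"
    proof -
      have "sqrt (L2sq M X T h) = r" using hs unfolding L2norm_def .
      moreover have "L2sq M X T h > 0"
      proof (rule ccontr)
        assume "\<not> L2sq M X T h > 0"
        hence "sqrt (L2sq M X T h) \<le> 0" by simp
        thus False using A(9) calculation by simp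
      qed
      ultimately show ?thesis by auto
    qed
    define R where "R = (r^2) powr \<alpha>"
    define K where "K = C * S * R"
    define \<xi> where "\<xi> = r^2 / (2 * K)"
    have R0: "R > 0" unfolding R_def using A(9) by simp
    have K0: "K > 0" unfolding K_def using R0 A(12) A(13) by simp
    have xi0: "\<xi> \<ge> 0" unfolding \<xi>_def using K0 by simp
    define E2 where "E2 = (\<Sum>t<T. integral\<^sup>L M (\<lambda>\<omega>. (norm (h (X t \<omega>)))^2))"
    define E4 where "E4 = (\<Sum>t<T. integral\<^sup>L M (\<lambda>\<omega>. (norm (h (X t \<omega>)))^4))"
    have E2v: "E2 = real T * r^2"
    proof -
      have "r^2 = (1 / real T) * E2" using hsq unfolding L2sq_def E2_def by simp
      thus ?thesis using A(2) by simp
    qed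
    have E4v: "E4 \<le> real T * (C * R)"
    proof -
      have "hypercontractive M X T C \<alpha> h" using A(19) that by blast
      hence "(1 / real T) * E4 \<le> C * R" using hsq
        unfolding hypercontractive_def E4_def R_def by simp
      hence "real T * ((1 / real T) * E4) \<le> real T * (C * R)" by (rule mult_left_mono) simp
      thus ?thesis using A(2) by simp
    qed
    have pers: "integral\<^sup>L M (\<lambda>\<omega>. exp (- \<xi> * emp h \<omega>)) \<le> exp (- \<xi> * E2 + \<xi>^2 * S / 2 * E4)"
      using A(18) that xi0 unfolding persistent_def emp_def E2_def E4_def by blast
    have "\<xi>^2 * S / 2 * E4 \<le> \<xi>^2 * S / 2 * (real T * (C * R))"
      using E4v A(13) by (intro mult_left_mono) auto
    also have "\<dots> = \<xi>^2 / 2 * (real T * K)" unfolding K_def by simp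
    finally have q4: "\<xi>^2 * S / 2 * E4 \<le> \<xi>^2 / 2 * (real T * K)" .
    have "measure M {\<omega>\<in>space M. emp h \<omega> \<le> a} \<le> integral\<^sup>L M (\<lambda>\<omega>. exp (- \<xi> * emp h \<omega>)) * exp (\<xi> * a)"
      by (rule chernoff[OF A(1) meas[OF hG] xi0]) (simp add: emp_def sum_nonneg)
    also have "\<dots> \<le> exp (- \<xi> * E2 + \<xi>^2 * S / 2 * E4) * exp (\<xi> * a)"
      using pers by (intro mult_right_mono) auto
    also have "\<dots> = exp (\<xi> * a - \<xi> * E2 + \<xi>^2 * S / 2 * E4)" by (simp add: exp_add[symmetric])
    also have "\<dots> \<le> exp (\<xi> * a - \<xi> * real T * r^2 + \<xi>^2 / 2 * (real T * K))"
      using q4 unfolding E2v by simp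
    also have "\<xi> * a - \<xi> * real T * r^2 + \<xi>^2 / 2 * (real T * K) \<le> - (8 * real T * r^4 / K) / \<theta>^2"
      unfolding \<xi>_def a_def using expo_ineq[OF A(8) A(9) _ K0, of "real T"] A(2) by simp
    also have "- (8 * real T * r^4 / K) / \<theta>^2 = - (8 * real T * r powr (4 - 2 * \<alpha>)) / (\<theta>^2 * C * S)"
    proof -
      have "R = r powr (2 * \<alpha>)" unfolding R_def using A(9)
        by (simp add: powr_powr[symmetric])
      moreover have "r powr (4 - 2 * \<alpha>) = r^4 / r powr (2 * \<alpha>)" using A(9)
        by (simp add: powr_diff)
      ultimately have "r^4 / K = r powr (4 - 2 * \<alpha>) / (C * S)" unfolding K_def
        by (simp add: field_simps)
      hence "- (8 * real T * r^4 / K) / \<theta>^2 = - (8 * real T * (r powr (4 - 2 * \<alpha>) / (C * S))) / \<theta>^2"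
        by (metis times_divide_eq_right)
      thus ?thesis by (simp add: field_simps)
    qed
    finally show ?thesis by simp
  qed
  have "measure M E \<le> (\<Sum>h\<in>Fr. measure M {\<omega>\<in>space M. emp h \<omega> \<le> a})"
    unfolding E_def
  proof (rule measure_UNION_le[OF A(14)])
    fix h assume "h \<in> Fr"
    hence "emp h \<in> borel_measurable M" using FrG meas by auto
    thus "{\<omega>\<in>space M. emp h \<omega> \<le> a} \<in> sets M" unfolding borel_measurable_iff_le by blast
  qed
  also have "\<dots> \<le> (\<Sum>h\<in>Fr. exp (- (8 * real T * r powr (4 - 2 * \<alpha>)) / (\<theta>^2 * C * S)))"
    by (rule sum_mono) (rule bound)
  also have "\<dots> = real (card Fr) * exp (- (8 * real T * r powr (4 - 2 * \<alpha>)) / (\<theta>^2 * C * S))"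
    by simp
  finally have "measure M E \<le> real (card Fr) * exp (- (8 * real T * r powr (4 - 2 * \<alpha>)) / (\<theta>^2 * C * S))" .
  with Esets incl show ?thesis by (intro bexI[of _ E]) auto
qed

end
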